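(* For every integer $n\ge 4$, $$\mathrm{wdim}_k(K_n\times K_n)=\begin{cases} n^2, & k\in\{2n+1,2n+2\};\\ n^2-1, & k=2n;\\ n^2-n, & k=2n-1 \text{ and } n\ge 5;\\ 13, & (n,k)=(4,7).\end{cases}$$
   Context: $K_n\times K_n$ is the direct product of two complete graphs on $n$ vertices: vertex set $[n]\times[n]$ with $[n]=\{1,\dots,n\}$, and $(i,j)$ adjacent to $(i',j')$ iff $i\ne i'$ and $j\ne j'$. For a connected graph $G$ with distance $d_G$, vertices $x,y,z$ and $S\subseteq V(G)$, let $\Delta_z(x,y)=|d_G(x,z)-d_G(y,z)|$ and $\Delta_S(x,y)=\sum_{z\in S}\Delta_z(x,y)$. A set $S$ is a weak $k$-resolving set if $\Delta_S(x,y)\ge k$ for all distinct $x,y\in V(G)$, and $\mathrm{wdim}_k(G)$ is the minimum cardinality of a weak $k$-resolving set of $G$. *)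

theory Defs
  imports Main
begin

definition edge_rel :: "'a set \<Rightarrow> ('a \<Rightarrow> 'a \<Rightarrow> bool) \<Rightarrow> ('a \<times> 'a) set" where
  "edge_rel V E = {(a, b). a \<in> V \<and> b \<in> V \<and> E a b}"

definition gdist :: "'a set \<Rightarrow> ('a \<Rightarrow> 'a \<Rightarrow> bool) \<Rightarrow> 'a \<Rightarrow> 'a \<Rightarrow> nat" where
  "gdist V E x y = (LEAST k. (x, y) \<in> (edge_rel V E) ^^ k)"

definition delta_z :: "'a set \<Rightarrow> ('a \<Rightarrow> 'a \<Rightarrow> bool) \<Rightarrow> 'a \<Rightarrow> 'a \<Rightarrow> 'a \<Rightarrow> nat" where
  "delta_z V E z x y = nat \<bar>int (gdist V E x z) - int (gdist V E y z)\<bar>"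

definition delta_S :: "'a set \<Rightarrow> ('a \<Rightarrow> 'a \<Rightarrow> bool) \<Rightarrow> 'a set \<Rightarrow> 'a \<Rightarrow> 'a \<Rightarrow> nat" where
  "delta_S V E S x y = (\<Sum>z\<in>S. delta_z V E z x y)"

definition weak_k_resolving :: "'a set \<Rightarrow> ('a \<Rightarrow> 'a \<Rightarrow> bool) \<Rightarrow> nat \<Rightarrow> 'a set \<Rightarrow> bool" where
  "weak_k_resolving V E k S \<longleftrightarrow> S \<subseteq> V \<and>
     (\<forall>x\<in>V. \<forall>y\<in>V. x \<noteq> y \<longrightarrow> delta_S V E S x y \<ge> k)"

definition wdim :: "'a set \<Rightarrow> ('a \<Rightarrow> 'a \<Rightarrow> bool) \<Rightarrow> nat \<Rightarrow> nat" where
  "wdim V E k = (LEAST c. \<exists>S. weak_k_resolving V E k S \<and> card S = c)"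

text \<open>Direct product K_n x K_n on [n] x [n].\<close>

definition KK_V :: "nat \<Rightarrow> (nat \<times> nat) set" where
  "KK_V n = {1..n} \<times> {1..n}"

definition KK_E :: "(nat \<times> nat) \<Rightarrow> (nat \<times> nat) \<Rightarrow> bool" where
  "KK_E u v \<longleftrightarrow> fst u \<noteq> fst v \<and> snd u \<noteq> snd v"

end

theory Submission
  imports Defs
begin

definition dd :: "nat\<times>nat \<Rightarrow> nat\<times>nat \<Rightarrow> int" where
  "dd x z = (if x = z then 0 else if KK_E x z then 1 else 2)"

lemma gdist_KK:
  assumes n: "n \<ge> 3" and x: "x \<in> KK_V n" and y: "y \<in> KK_V n"
  shows "int (gdist (KK_V n) KK_E x y) = dd x y"
proof -
  let ?R = "edge_rel (KK_V n) KK_E"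
  have R: "(u,v) \<in> ?R \<longleftrightarrow> u \<in> KK_V n \<and> v \<in> KK_V n \<and> KK_E u v" for u v
    by (simp add: edge_rel_def)
  show ?thesis
  proof (cases "x = y")
    case True
    have "gdist (KK_V n) KK_E x y = 0" unfolding gdist_def using True
      by (intro Least_equality) auto
    then show ?thesis using True by (simp add: dd_def)
  next
    case ne: False
    show ?thesis
    proof (cases "KK_E x y")
      case True
      have "gdist (KK_V n) KK_E x y = 1" unfolding gdist_def
      proof (intro Least_equality)
        show "(x,y) \<in> ?R ^^ 1" using True x y R by simp
        fix k assume "(x,y) \<in> ?R ^^ k"
        then show "1 \<le> k" using ne by (cases k) auto
      qed
      then show ?thesis using True ne by (simp add: dd_def)
    next
      case False
      define i where "i = (if 1 \<notin> {fst x, fst y} then 1 else if 2 \<notin> {fst x, fst y} then 2 else (3::nat))"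
      have i: "i \<in> {1,2,3::nat}" "i \<noteq> fst x" "i \<noteq> fst y" unfolding i_def by auto
      define j where "j = (if 1 \<notin> {snd x, snd y} then 1 else if 2 \<notin> {snd x, snd y} then 2 else (3::nat))"
      have j: "j \<in> {1,2,3::nat}" "j \<noteq> snd x" "j \<noteq> snd y" unfolding j_def by auto
      have m: "(i,j) \<in> KK_V n" using i j n by (auto simp: KK_V_def)
      have "gdist (KK_V n) KK_E x y = 2" unfolding gdist_def
      proof (intro Least_equality)
        have "(x,(i,j)) \<in> ?R" "((i,j),y) \<in> ?R" using R x y m i j by (auto simp: KK_E_def)
        then show "(x,y) \<in> ?R ^^ 2" by (auto simp: numeral_2_eq_2 relcomp.simps)
        fix k assume k: "(x,y) \<in> ?R ^^ k"
        show "2 \<le> k"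
        proof (rule ccontr)
          assume "\<not> 2 \<le> k"
          then have "k = 0 \<or> k = 1" by auto
          then show False using k ne False by (auto simp: edge_rel_def)
        qed
      qed
      then show ?thesis using False ne by (simp add: dd_def)
    qed
  qed
qed

lemma dz_eq:
  assumes "n \<ge> 3" "x \<in> KK_V n" "y \<in> KK_V n" "z \<in> KK_V n"
  shows "delta_z (KK_V n) KK_E z x y = nat \<bar>dd x z - dd y z\<bar>"
  using gdist_KK[OF assms(1,2,4)] gdist_KK[OF assms(1,3,4)] by (simp add: delta_z_def)

lemma sum_V: "(\<Sum>z\<in>KK_V n. f z) = (\<Sum>i=1..n. \<Sum>j=1..n. f (i,j))"
  by (simp add: KK_V_def sum.cartesian_product)


lemma sum_if_const: "(\<Sum>j\<in>A. if P then f j else 0) = (if P then sum f A else 0)"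
  by auto

lemma row_sum:
  assumes n: "n \<ge> 3" and r: "r \<in> {1..n}" and a: "a \<in> {1..n}" and b: "b \<in> {1..n}" and ab: "a \<noteq> b"
  shows "delta_S (KK_V n) KK_E (KK_V n) (r,a) (r,b) = 2*n+2"
proof -
  have xy: "(r,a) \<in> KK_V n" "(r,b) \<in> KK_V n" using r a b by (auto simp: KK_V_def)
  have "delta_S (KK_V n) KK_E (KK_V n) (r,a) (r,b) = (\<Sum>z\<in>KK_V n. nat \<bar>dd (r,a) z - dd (r,b) z\<bar>)"
    unfolding delta_S_def using dz_eq[OF n xy] by (intro sum.cong) auto
  also have "\<dots> = (\<Sum>i=1..n. \<Sum>j=1..n. (if j = a then 1 else 0) + (if j = b then 1 else 0)
       + (if i = r then (if j = a then 1 else 0) else 0) + (if i = r then (if j = b then 1 else 0) else 0))"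
    unfolding sum_V using ab by (intro sum.cong refl) (auto simp: dd_def KK_E_def)
  also have "\<dots> = (\<Sum>i=1..n. 2 + 2 * (if i = r then 1 else 0))"
    using a b by (intro sum.cong refl) (simp add: sum.distrib sum_if_const)
  also have "\<dots> = (\<Sum>i=1..n. 2) + 2 * (\<Sum>i=1..n. if i = r then 1 else 0)"
    by (simp only: sum.distrib sum_distrib_left)
  also have "\<dots> = 2*n+2" using r by simp
  finally show ?thesis .
qed


lemma sum_V2: "(\<Sum>z\<in>KK_V n. f z) = (\<Sum>j=1..n. \<Sum>i=1..n. f (i,j))"
  unfolding sum_V by (rule sum.swap)

lemma col_sum:
  assumes n: "n \<ge> 3" and r: "r \<in> {1..n}" and a: "a \<in> {1..n}" and b: "b \<in> {1..n}" and ab: "a \<noteq> b"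
  shows "delta_S (KK_V n) KK_E (KK_V n) (a,r) (b,r) = 2*n+2"
proof -
  have xy: "(a,r) \<in> KK_V n" "(b,r) \<in> KK_V n" using r a b by (auto simp: KK_V_def)
  have "delta_S (KK_V n) KK_E (KK_V n) (a,r) (b,r) = (\<Sum>z\<in>KK_V n. nat \<bar>dd (a,r) z - dd (b,r) z\<bar>)"
    unfolding delta_S_def using dz_eq[OF n xy] by (intro sum.cong) auto
  also have "\<dots> = (\<Sum>j=1..n. \<Sum>i=1..n. (if i = a then 1 else 0) + (if i = b then 1 else 0)
       + (if j = r then (if i = a then 1 else 0) else 0) + (if j = r then (if i = b then 1 else 0) else 0))"
    unfolding sum_V2 using ab by (intro sum.cong refl) (auto simp: dd_def KK_E_def)
  also have "\<dots> = (\<Sum>j=1..n. 2 + 2 * (if j = r then 1 else 0))"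
    using a b by (intro sum.cong refl) (simp add: sum.distrib sum_if_const)
  also have "\<dots> = (\<Sum>j=1..n. 2) + 2 * (\<Sum>j=1..n. if j = r then 1 else 0)"
    by (simp only: sum.distrib sum_distrib_left)
  also have "\<dots> = 2*n+2" using r by simp
  finally show ?thesis .
qed


lemma sum_not_delta:
  assumes "c \<in> {1..n}"
  shows "(\<Sum>j=1..n. if j = c then 0 else (1::nat)) = n - 1"
proof -
  have "(\<Sum>j=1..n. if j = c then 0 else (1::nat)) = (\<Sum>j\<in>{1..n} - {c}. 1)"
    by (simp add: sum.If_cases Diff_eq Int_commute)
  also have "\<dots> = n - 1" using assms by simp
  finally show ?thesis .
qed

lemma adj_sum:
  assumes n: "n \<ge> 3" and x: "(r1,c1) \<in> KK_V n" and y: "(r2,c2) \<in> KK_V n" and rr: "r1 \<noteq> r2" and cc: "c1 \<noteq> c2"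
  shows "delta_S (KK_V n) KK_E (KK_V n) (r1,c1) (r2,c2) = 4*n-6"
proof -
  have rc: "r1 \<in> {1..n}" "r2 \<in> {1..n}" "c1 \<in> {1..n}" "c2 \<in> {1..n}" using x y by (auto simp: KK_V_def)
  have "delta_S (KK_V n) KK_E (KK_V n) (r1,c1) (r2,c2) = (\<Sum>z\<in>KK_V n. nat \<bar>dd (r1,c1) z - dd (r2,c2) z\<bar>)"
    unfolding delta_S_def using dz_eq[OF n x y] by (intro sum.cong) auto
  also have "\<dots> = (\<Sum>i=1..n. \<Sum>j=1..n. if i = r1 then (if j = c2 then 0 else 1) else if i = r2 then (if j = c1 then 0 else 1)
       else (if j = c1 then 1 else 0) + (if j = c2 then 1 else 0))"
    unfolding sum_V using rr cc by (intro sum.cong refl) (auto simp: dd_def KK_E_def)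
  also have "\<dots> = (\<Sum>i=1..n. 2 + (if i = r1 then n - 3 else 0) + (if i = r2 then n - 3 else 0))"
  proof (intro sum.cong refl)
    fix i assume "i \<in> {1..n}"
    show "(\<Sum>j=1..n. if i = r1 then (if j = c2 then 0 else 1) else if i = r2 then (if j = c1 then 0 else 1)
       else (if j = c1 then 1 else 0) + (if j = c2 then 1 else 0)) = 2 + (if i = r1 then n - 3 else 0) + (if i = r2 then n - 3 else 0)"
      using rc rr n sum_not_delta[OF rc(3)] sum_not_delta[OF rc(4)] by (auto simp: sum.distrib)
  qed
  also have "\<dots> = (\<Sum>i=1..n. 2) + (\<Sum>i=1..n. if i = r1 then n - 3 else 0) + (\<Sum>i=1..n. if i = r2 then n - 3 else 0)"
    by (simp only: sum.distrib)
  also have "\<dots> = 4*n-6" using rc n by simp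
  finally show ?thesis .
qed


abbreviation "DS n S x y \<equiv> delta_S (KK_V n) KK_E S x y"
abbreviation "DZ n z x y \<equiv> delta_z (KK_V n) KK_E z x y"

lemma finite_V: "finite (KK_V n)" by (simp add: KK_V_def)
lemma card_V: "card (KK_V n) = n^2" by (simp add: KK_V_def power2_eq_square)

lemma DS_split: "S \<subseteq> KK_V n \<Longrightarrow> DS n (KK_V n) x y = DS n S x y + DS n (KK_V n - S) x y"
  unfolding delta_S_def using finite_V
  by (metis add.commute sum.subset_diff)

lemma DS_mono: "S \<subseteq> T \<Longrightarrow> T \<subseteq> KK_V n \<Longrightarrow> DS n S x y \<le> DS n T x y"
  unfolding delta_S_def using finite_V
  by (intro sum_mono2) (auto intro: finite_subset)

lemma DZ_le2: "n \<ge> 3 \<Longrightarrow> x \<in> KK_V n \<Longrightarrow> y \<in> KK_V n \<Longrightarrow> z \<in> KK_V n \<Longrightarrow> DZ n z x y \<le> 2"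
  by (simp add: dz_eq dd_def)

lemma DZ_le1: "n \<ge> 3 \<Longrightarrow> x \<in> KK_V n \<Longrightarrow> y \<in> KK_V n \<Longrightarrow> z \<in> KK_V n \<Longrightarrow> KK_E x y \<Longrightarrow> DZ n z x y \<le> 1"
  by (auto simp add: dz_eq dd_def KK_E_def)

lemma DS_le2: assumes "n \<ge> 3" "x \<in> KK_V n" "y \<in> KK_V n" "W \<subseteq> KK_V n"
  shows "DS n W x y \<le> 2 * card W"
proof -
  have "DS n W x y \<le> card W * 2" unfolding delta_S_def
    proof (rule sum_bounded_above[of W "\<lambda>z. DZ n z x y" 2, simplified])
    fix z assume "z \<in> W" then show "DZ n z x y \<le> 2" using assms DZ_le2[of n x y z] by auto
  qed
  then show ?thesis by simp
qed

lemma DS_le1: assumes "n \<ge> 3" "x \<in> KK_V n" "y \<in> KK_V n" "W \<subseteq> KK_V n" "KK_E x y"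
  shows "DS n W x y \<le> card W"
proof -
  have "DS n W x y \<le> card W" unfolding delta_S_def
    proof (rule sum_bounded_above[of W "\<lambda>z. DZ n z x y" 1, simplified])
    fix z assume "z \<in> W" then show "DZ n z x y \<le> Suc 0" using assms DZ_le1[of n x y z] by auto
  qed
  then show ?thesis by simp
qed

lemma pair_cases:
  assumes n: "n \<ge> 3" and x: "x \<in> KK_V n" and y: "y \<in> KK_V n" and ne: "x \<noteq> y"
  shows "DS n (KK_V n) x y = (if KK_E x y then 4*n-6 else 2*n+2)"
proof (cases "KK_E x y")
  case True
  obtain r1 c1 r2 c2 where "x = (r1,c1)" "y = (r2,c2)" by fastforce
  then show ?thesis using adj_sum[OF n] x y True by (auto simp: KK_E_def)
next
  case False
  obtain r1 c1 r2 c2 where xy: "x = (r1,c1)" "y = (r2,c2)" by fastforce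
  have rc: "r1 \<in> {1..n}" "r2 \<in> {1..n}" "c1 \<in> {1..n}" "c2 \<in> {1..n}" using x y xy by (auto simp: KK_V_def)
  show ?thesis
  proof (cases "r1 = r2")
    case True
    then show ?thesis using row_sum[OF n rc(1) rc(3) rc(4)] xy ne False by auto
  next
    case f2: False
    then have "c1 = c2" using False xy by (auto simp: KK_E_def)
    then show ?thesis using col_sum[OF n rc(3) rc(1) rc(2)] xy ne False f2 by auto
  qed
qed

lemma succ:
  assumes n: "n \<ge> 3" and S: "S \<subseteq> KK_V n"
    and h: "\<And>x y. x \<in> KK_V n \<Longrightarrow> y \<in> KK_V n \<Longrightarrow> x \<noteq> y \<Longrightarrow>
        DS n (KK_V n - S) x y + k \<le> (if KK_E x y then 4*n-6 else 2*n+2)"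
  shows "weak_k_resolving (KK_V n) KK_E k S"
  unfolding weak_k_resolving_def
proof (intro conjI S ballI impI)
  fix x y assume xy: "x \<in> KK_V n" "y \<in> KK_V n" "x \<noteq> y"
  show "k \<le> DS n S x y"
    using h[OF xy] pair_cases[OF n xy] DS_split[OF S, of x y] by linarith
qed

lemma fail:
  assumes S: "S \<subseteq> KK_V n" and W: "W \<subseteq> KK_V n - S" and xy: "x \<in> KK_V n" "y \<in> KK_V n" "x \<noteq> y"
    and lt: "DS n (KK_V n) x y < k + DS n W x y"
  shows "\<not> weak_k_resolving (KK_V n) KK_E k S"
proof
  assume "weak_k_resolving (KK_V n) KK_E k S"
  then have "k \<le> DS n S x y" using xy unfolding weak_k_resolving_def by blast
  also have "\<dots> \<le> DS n (KK_V n - W) x y" using S W by (intro DS_mono) auto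
  moreover have "W \<subseteq> KK_V n" using W by auto
  ultimately show False using DS_split[of W n x y] lt by linarith
qed

lemma DS_two: "w1 \<noteq> w2 \<Longrightarrow> DS n {w1,w2} x y = DZ n w1 x y + DZ n w2 x y"
  by (simp add: delta_S_def)

lemma row_fail:
  assumes n: "n \<ge> 3" and S: "S \<subseteq> KK_V n" and w: "(r,a) \<in> KK_V n - S" "(r,b) \<in> KK_V n - S"
    and ab: "a \<noteq> b" and k: "2*n - 2 < k"
  shows "\<not> weak_k_resolving (KK_V n) KK_E k S"
proof -
  have rc: "r \<in> {1..n}" "a \<in> {1..n}" "b \<in> {1..n}" using w by (auto simp: KK_V_def)
  have "DS n {(r,a),(r,b)} (r,a) (r,b) = 4"
    using ab w n by (simp add: DS_two dz_eq dd_def KK_E_def)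
  then show ?thesis using row_sum[OF n rc ab] w ab k n
    by (intro fail[OF S, of "{(r,a),(r,b)}" "(r,a)" "(r,b)"]) auto
qed

lemma col_fail:
  assumes n: "n \<ge> 3" and S: "S \<subseteq> KK_V n" and w: "(a,r) \<in> KK_V n - S" "(b,r) \<in> KK_V n - S"
    and ab: "a \<noteq> b" and k: "2*n - 2 < k"
  shows "\<not> weak_k_resolving (KK_V n) KK_E k S"
proof -
  have rc: "r \<in> {1..n}" "a \<in> {1..n}" "b \<in> {1..n}" using w by (auto simp: KK_V_def)
  have "DS n {(a,r),(b,r)} (a,r) (b,r) = 4"
    using ab w n by (simp add: DS_two dz_eq dd_def KK_E_def)
  then show ?thesis using col_sum[OF n rc ab] w ab k n
    by (intro fail[OF S, of "{(a,r),(b,r)}" "(a,r)" "(b,r)"]) auto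
qed

lemma wdim_eq:
  assumes ex: "weak_k_resolving (KK_V n) KK_E k S0" "card S0 = m"
    and lb: "\<And>S. S \<subseteq> KK_V n \<Longrightarrow> card S < m \<Longrightarrow> \<not> weak_k_resolving (KK_V n) KK_E k S"
  shows "wdim (KK_V n) KK_E k = m"
  unfolding wdim_def
proof (rule Least_equality)
  show "\<exists>S. weak_k_resolving (KK_V n) KK_E k S \<and> card S = m" using ex by blast
  fix c assume "\<exists>S. weak_k_resolving (KK_V n) KK_E k S \<and> card S = c"
  then obtain S where "weak_k_resolving (KK_V n) KK_E k S" "card S = c" by blast
  then show "m \<le> c" using lb unfolding weak_k_resolving_def by (meson not_le)
qed


definition Dg :: "nat set \<Rightarrow> (nat \<times> nat) set" where "Dg I = (\<lambda>i. (i,i)) ` I"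

lemma Dg_sub: "I \<subseteq> {1..n} \<Longrightarrow> Dg I \<subseteq> KK_V n"
  by (auto simp: Dg_def KK_V_def)

lemma card_Dg: "card (Dg I) = card I"
  unfolding Dg_def by (rule card_image) (auto simp: inj_on_def)

lemma DS_Dg: "DS n (Dg I) x y = (\<Sum>i\<in>I. DZ n (i,i) x y)"
  unfolding Dg_def delta_S_def by (subst sum.reindex) (auto simp: inj_on_def)

lemma diag_full:
  assumes n: "n \<ge> 3" and x: "x \<in> KK_V n" and y: "y \<in> KK_V n" and ne: "x \<noteq> y" and nE: "\<not> KK_E x y"
  shows "DS n (Dg {1..n}) x y \<le> 3"
proof -
  obtain r1 c1 r2 c2 where xy: "x = (r1,c1)" "y = (r2,c2)" by fastforce
  have rc: "r1 \<in> {1..n}" "r2 \<in> {1..n}" "c1 \<in> {1..n}" "c2 \<in> {1..n}" using x y xy by (auto simp: KK_V_def)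
  have gen: "(\<Sum>i=1..n. (if i = a then (if a = r then 2 else 1) else 0) + (if i = b then (if b = r then 2 else 1) else 0)) \<le> (3::nat)"
    if "a \<noteq> b" for a b r
  proof -
    have "(\<Sum>i=1..n. (if i = a then (if a = r then 2 else 1) else 0) + (if i = b then (if b = r then 2 else 1) else 0))
      = (\<Sum>i=1..n. (if i = a then (if a = r then 2 else 1) else 0)) + (\<Sum>i=1..n. (if i = b then (if b = r then 2 else 1) else (0::nat)))"
      by (rule sum.distrib)
    also have "\<dots> \<le> 3" using that by simp
    finally show ?thesis .
  qed
  show ?thesis
  proof (cases "r1 = r2")
    case True
    then have cc: "c1 \<noteq> c2" using ne xy by auto
    have "DS n (Dg {1..n}) x y = (\<Sum>i=1..n. (if i = c1 then (if c1 = r1 then 2 else 1) else 0) + (if i = c2 then (if c2 = r1 then 2 else 1) else 0))"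
      (is "_ = (\<Sum>i=1..n. ?R i)")
      unfolding DS_Dg
    proof (intro sum.cong refl)
      fix i assume i: "i \<in> {1..n}"
      then have "(i,i) \<in> KK_V n" by (auto simp: KK_V_def)
      then show "DZ n (i,i) x y = ?R i" using dz_eq[OF n x y, of "(i,i)"] True cc xy
        by (auto simp: dd_def KK_E_def)
    qed
    then show ?thesis using gen[OF cc] by simp
  next
    case False
    then have cc: "c1 = c2" using nE xy by (auto simp: KK_E_def)
    have "DS n (Dg {1..n}) x y = (\<Sum>i=1..n. (if i = r1 then (if r1 = c1 then 2 else 1) else 0) + (if i = r2 then (if r2 = c1 then 2 else 1) else 0))"
      (is "_ = (\<Sum>i=1..n. ?R i)")
      unfolding DS_Dg
    proof (intro sum.cong refl)
      fix i assume i: "i \<in> {1..n}"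
      then have "(i,i) \<in> KK_V n" by (auto simp: KK_V_def)
      then show "DZ n (i,i) x y = ?R i" using dz_eq[OF n x y, of "(i,i)"] False cc xy
        by (auto simp: dd_def KK_E_def)
    qed
    then show ?thesis using gen[OF False] by simp
  qed
qed

lemma diag_loss:
  assumes n: "n \<ge> 3" and I: "I \<subseteq> {1..n}" and x: "x \<in> KK_V n" and y: "y \<in> KK_V n" and ne: "x \<noteq> y" and nE: "\<not> KK_E x y"
  shows "DS n (Dg I) x y \<le> 3"
proof -
  have "DS n (Dg I) x y \<le> DS n (Dg {1..n}) x y"
    using I by (intro DS_mono Dg_sub) (auto simp: Dg_def)
  then show ?thesis using diag_full[OF n x y ne nE] by linarith
qed


lemma noninj_fst: "\<not> inj_on fst W \<Longrightarrow> \<exists>r a b. a \<noteq> b \<and> (r,a) \<in> W \<and> (r,b) \<in> W"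
  unfolding inj_on_def by (metis prod.collapse prod_eqI)

lemma noninj_snd: "\<not> inj_on snd W \<Longrightarrow> \<exists>r a b. a \<noteq> b \<and> (a,r) \<in> W \<and> (b,r) \<in> W"
  unfolding inj_on_def by (metis prod.collapse prod_eqI)

lemma fst_sub: "W \<subseteq> KK_V n \<Longrightarrow> fst ` W \<subseteq> {1..n}"
  by (auto simp: KK_V_def)
lemma snd_sub: "W \<subseteq> KK_V n \<Longrightarrow> snd ` W \<subseteq> {1..n}"
  by (auto simp: KK_V_def)

lemma big_noninj: "W \<subseteq> KK_V n \<Longrightarrow> card W > n \<Longrightarrow> \<not> inj_on fst W"
proof
  assume W: "W \<subseteq> KK_V n" and c: "card W > n" and inj: "inj_on fst W"
  have "card (fst ` W) \<le> n" using card_mono[OF _ fst_sub[OF W]] by simp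
  then show False using card_image[OF inj] c by simp
qed

lemma card_compl:
  assumes S: "S \<subseteq> KK_V n" shows "card (KK_V n - S) = n^2 - card S"
  using card_Diff_subset[OF finite_subset[OF S finite_V] S] card_V by simp

theorem partA:
  assumes n: "n \<ge> 4" and k: "k \<in> {2*n+1, 2*n+2}"
  shows "wdim (KK_V n) KK_E k = n^2"
proof (rule wdim_eq)
  show "weak_k_resolving (KK_V n) KK_E k (KK_V n)"
    using n k by (intro succ) (auto simp: delta_S_def)
  show "card (KK_V n) = n^2" by (rule card_V)
  fix S assume S: "S \<subseteq> KK_V n" and c: "card S < n^2"
  have "KK_V n - S \<noteq> {}" using card_mono[OF finite_V, of S] S c card_V by auto
  then obtain r a where w: "(r,a) \<in> KK_V n - S" by auto
  define b where "b = (if a = 1 then 2 else (1::nat))"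
  have rc: "r \<in> {1..n}" "a \<in> {1..n}" "b \<in> {1..n}" "a \<noteq> b" using w n by (auto simp: KK_V_def b_def)
  have y: "(r,b) \<in> KK_V n" using rc by (auto simp: KK_V_def)
  have "DS n {(r,a)} (r,a) (r,b) = 2" using w y n rc by (simp add: delta_S_def dz_eq dd_def KK_E_def)
  then show "\<not> weak_k_resolving (KK_V n) KK_E k S"
    using row_sum[of n r a b] rc n k w y
    by (intro fail[OF S, of "{(r,a)}" "(r,a)" "(r,b)"]) auto
qed

theorem partB:
  assumes n: "n \<ge> 4"
  shows "wdim (KK_V n) KK_E (2*n) = n^2 - 1"
proof (rule wdim_eq)
  have p: "(1,1) \<in> KK_V n" using n by (auto simp: KK_V_def)
  have e: "KK_V n - (KK_V n - {(1,1)}) = {(1,1)}" using p by auto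
  show "weak_k_resolving (KK_V n) KK_E (2*n) (KK_V n - {(1,1)})"
  proof (intro succ)
    fix x y assume xy: "x \<in> KK_V n" "y \<in> KK_V n" "x \<noteq> y"
    show "DS n (KK_V n - (KK_V n - {(1, 1)})) x y + 2 * n \<le> (if KK_E x y then 4 * n - 6 else 2 * n + 2)"
      unfolding e using DS_le2[of n x y "{(1,1)}"] DS_le1[of n x y "{(1,1)}"] n xy p by auto
  qed (use n in auto)
  show "card (KK_V n - {(1,1)}) = n^2 - 1" using p card_V finite_V by simp
  fix S assume S: "S \<subseteq> KK_V n" and c: "card S < n^2 - 1"
  have "card (KK_V n - S) \<ge> 2" using card_compl[OF S] c by simp
  then obtain w1 w2 where w: "w1 \<in> KK_V n - S" "w2 \<in> KK_V n - S" "w1 \<noteq> w2"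
  proof -
    have fin: "finite (KK_V n - S)" using finite_V by auto
    have "\<not> card (KK_V n - S) \<le> Suc 0" using \<open>card (KK_V n - S) \<ge> 2\<close> by simp
    then show ?thesis using card_le_Suc0_iff_eq[OF fin] that by blast
  qed
  obtain r1 c1 r2 c2 where ww: "w1 = (r1,c1)" "w2 = (r2,c2)" by fastforce
  show "\<not> weak_k_resolving (KK_V n) KK_E (2*n) S"
  proof (cases "r1 = r2")
    case True
    then show ?thesis using row_fail[OF _ S, of r1 c1 c2] w ww n by auto
  next
    case rr: False
    show ?thesis
    proof (cases "c1 = c2")
      case True
      then show ?thesis using col_fail[OF _ S, of r1 c1 r2] w ww n by auto
    next
      case cc: False
      have rc: "r1 \<in> {1..n}" "c1 \<in> {1..n}" "c2 \<in> {1..n}" using w ww by (auto simp: KK_V_def)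
      have y: "(r1,c2) \<in> KK_V n" using rc by (auto simp: KK_V_def)
      have "DS n {w1,w2} (r1,c1) (r1,c2) = 3" using w y n rc rr cc ww
        by (simp add: DS_two dz_eq dd_def KK_E_def)
      then show ?thesis
        using row_sum[of n r1 c1 c2] rc n w y ww cc
        by (intro fail[OF S, of "{w1,w2}" "(r1,c1)" "(r1,c2)"]) auto
    qed
  qed
qed

theorem partC:
  assumes n: "n \<ge> 5"
  shows "wdim (KK_V n) KK_E (2*n-1) = n^2 - n"
proof (rule wdim_eq)
  have D: "Dg {1..n} \<subseteq> KK_V n" by (rule Dg_sub) auto
  have e: "KK_V n - (KK_V n - Dg {1..n}) = Dg {1..n}" using D by auto
  show "weak_k_resolving (KK_V n) KK_E (2*n-1) (KK_V n - Dg {1..n})"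
  proof (intro succ)
    fix x y assume xy: "x \<in> KK_V n" "y \<in> KK_V n" "x \<noteq> y"
    show "DS n (KK_V n - (KK_V n - Dg {1..n})) x y + (2*n-1) \<le> (if KK_E x y then 4 * n - 6 else 2 * n + 2)"
      unfolding e using DS_le1[of n x y "Dg {1..n}"] diag_loss[of n "{1..n}" x y] n xy D card_Dg[of "{1..n}"] by auto
  qed (use n in auto)
  show "card (KK_V n - Dg {1..n}) = n^2 - n" using card_compl[OF D] card_Dg[of "{1..n}"] by simp
  fix S assume S: "S \<subseteq> KK_V n" and c: "card S < n^2 - n"
  have "card (KK_V n - S) > n" using card_compl[OF S] c by simp
  then have "\<not> inj_on fst (KK_V n - S)" by (intro big_noninj) auto
  then obtain r a b where "a \<noteq> b" "(r,a) \<in> KK_V n - S" "(r,b) \<in> KK_V n - S" using noninj_fst by blast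
  then show "\<not> weak_k_resolving (KK_V n) KK_E (2*n-1) S"
    using row_fail[OF _ S, of r a b] n by auto
qed


theorem partD: "wdim (KK_V 4) KK_E 7 = 13"
proof (rule wdim_eq)
  have D: "Dg {1..3} \<subseteq> KK_V 4" by (rule Dg_sub) auto
  have e: "KK_V 4 - (KK_V 4 - Dg {1..3}) = Dg {1..3}" using D by auto
  show "weak_k_resolving (KK_V 4) KK_E 7 (KK_V 4 - Dg {1..3})"
  proof (intro succ)
    fix x y assume xy: "x \<in> KK_V 4" "y \<in> KK_V 4" "x \<noteq> y"
    show "DS 4 (KK_V 4 - (KK_V 4 - Dg {1..3})) x y + 7 \<le> (if KK_E x y then 4 * 4 - 6 else 2 * 4 + 2)"
      unfolding e using DS_le1[of 4 x y "Dg {1..3}"] diag_loss[of 4 "{1..3}" x y] xy D card_Dg[of "{1..3}"] by auto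
  qed auto
  show "card (KK_V 4 - Dg {1..3}) = 13" using card_compl[OF D] card_Dg[of "{1..3}"] by simp
  fix S assume S: "S \<subseteq> KK_V 4" and c: "card S < 13"
  define W where "W = KK_V 4 - S"
  have W: "W \<subseteq> KK_V 4" unfolding W_def by auto
  have cW: "card W \<ge> 4" using card_compl[OF S] c unfolding W_def by simp
  show "\<not> weak_k_resolving (KK_V 4) KK_E 7 S"
  proof (cases "inj_on fst W")
    case False
    then obtain r a b where "a \<noteq> b" "(r,a) \<in> KK_V 4 - S" "(r,b) \<in> KK_V 4 - S" using noninj_fst W_def by blast
    then show ?thesis using row_fail[OF _ S, of r a b] by auto
  next
    case injf: True
    show ?thesis
    proof (cases "inj_on snd W")
      case False
      then obtain r a b where "a \<noteq> b" "(a,r) \<in> KK_V 4 - S" "(b,r) \<in> KK_V 4 - S" using noninj_snd W_def by blast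
      then show ?thesis using col_fail[OF _ S, of a r b] by auto
    next
      case injs: True
      have fs: "fst ` W \<subseteq> {1..4}" by (rule fst_sub[OF W])
      have "card (fst ` W) \<ge> 4" using card_image[OF injf] cW by simp
      then have feq: "fst ` W = {1..4}" using fs by (intro card_subset_eq) (auto dest: card_mono[rotated])
      have ex: "\<exists>s. (i,s) \<in> W" if "i \<in> {1..4}" for i
      proof -
        have "i \<in> fst ` W" using feq that by simp
        then show ?thesis by force
      qed
      obtain s1 where s1: "(1,s1) \<in> W" using ex[of 1] by auto
      obtain s2 where s2: "(2,s2) \<in> W" using ex[of 2] by auto
      obtain s3 where s3: "(3,s3) \<in> W" using ex[of 3] by auto
      obtain s4 where s4: "(4,s4) \<in> W" using ex[of 4] by auto
      have dist: "s1 \<noteq> s2" "s1 \<noteq> s3" "s1 \<noteq> s4" "s2 \<noteq> s3" "s2 \<noteq> s4" "s3 \<noteq> s4"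
        using inj_onD[OF injs _ s1 s2] inj_onD[OF injs _ s1 s3] inj_onD[OF injs _ s1 s4]
          inj_onD[OF injs _ s2 s3] inj_onD[OF injs _ s2 s4] inj_onD[OF injs _ s3 s4] by auto
      have sr: "s1 \<in> {1..4}" "s2 \<in> {1..4}" "s3 \<in> {1..4}" "s4 \<in> {1..4}"
        using s1 s2 s3 s4 W by (auto simp: KK_V_def)
      have x: "(1,s2) \<in> KK_V 4" and y: "(3,s4) \<in> KK_V 4" using sr by (auto simp: KK_V_def)
      have m: "(1,s1) \<in> KK_V 4" "(2,s2) \<in> KK_V 4" "(3,s3) \<in> KK_V 4" "(4,s4) \<in> KK_V 4"
        using s1 s2 s3 s4 W by auto
      have "DS 4 {(1,s1),(2,s2),(3,s3),(4,s4)} (1,s2) (3,s4) = 4"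
        using dist m x y by (simp add: delta_S_def dz_eq dd_def KK_E_def)
      moreover have "DS 4 (KK_V 4) (1,s2) (3,s4) = 10" using adj_sum[of 4 1 s2 3 s4] x y dist by simp
      ultimately show ?thesis using x y s1 s2 s3 s4 unfolding W_def
        by (intro fail[OF S, of "{(1,s1),(2,s2),(3,s3),(4,s4)}" "(1,s2)" "(3,s4)"]) auto
    qed
  qed
qed

theorem mainTheorem6:
  fixes n k :: nat
  assumes "n \<ge> 4"
  shows "(k \<in> {2*n+1, 2*n+2} \<longrightarrow> wdim (KK_V n) KK_E k = n^2)
       \<and> (k = 2*n \<longrightarrow> wdim (KK_V n) KK_E k = n^2 - 1)
       \<and> (k = 2*n - 1 \<and> n \<ge> 5 \<longrightarrow> wdim (KK_V n) KK_E k = n^2 - n)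
       \<and> ((n, k) = (4, 7) \<longrightarrow> wdim (KK_V n) KK_E k = 13)"
  using partA[OF assms] partB[OF assms] partC partD by auto

end
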